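(* Let $n$ be a nonnegative integer and let $a,c\in\mathbb{C}$ be such that all hypergeometric series and quotients below are defined (no lower parameter is zero or a negative integer). Then \[ {}_3F_2\!\left(\left.{-2n,a,c \atop \frac{a}{2}-n,\frac{a+1}{2}-n}\right| \frac{1}{4}\right) =\frac{(-1)^n(2n)!\,(c)_n}{n!\,(1-a)_{2n}}\, {}_3F_2\!\left(\left.{-n,1+c-a+n,a-c-n \atop \frac{1}{2},1-c-n}\right| \frac{1}{4}\right) \] and \[ {}_3F_2\!\left(\left.{-2n-1,a,c \atop \frac{a-1}{2}-n,\frac{a}{2}-n}\right| \frac{1}{4}\right) =\frac{(-1)^n(1+c-a+n)(2n+1)!\,(c)_n}{n!\,(1-a)_{2n+1}}\, {}_3F_2\!\left(\left.{-n,2+c-a+n,a-c-n \atop \frac{3}{2},1-c-n}\right| \frac{1}{4}\right). \]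
   Context: For $a\in\mathbb{C}$, $(a)_0=1$ and $(a)_k=a(a+1)\cdots(a+k-1)$ for $k\ge1$. The hypergeometric series is ${}_rF_s\!\left(\left.{\alpha_1,\ldots,\alpha_r\atop \beta_1,\ldots,\beta_s}\right|z\right)=\sum_{k\ge0}\frac{(\alpha_1)_k\cdots(\alpha_r)_k}{k!(\beta_1)_k\cdots(\beta_s)_k}z^k$, with no lower parameter zero or a negative integer; when an upper parameter is $-n$ (or $-2n$, $-2n-1$) it is a finite sum. *)

theory Defs
  imports "HOL-Analysis.Analysis"
begin

text \<open>Generalized hypergeometric series rFs with upper parameters as and lower
parameters bs, defined as the (formal) infinite series; in all uses below one upper
parameter is a nonpositive integer so the series terminates.\<close>
definition hyperF :: "complex list \<Rightarrow> complex list \<Rightarrow> complex \<Rightarrow> complex" where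
  "hyperF as bs z =
     (\<Sum>k. (\<Prod>a\<leftarrow>as. pochhammer a k) / (fact k * (\<Prod>b\<leftarrow>bs. pochhammer b k)) * z ^ k)"

end

theory Submission
  imports Defs "HOL-Computational_Algebra.Formal_Power_Series"
begin

lemma poch_nz: "x \<notin> \<int>\<^sub>\<le>\<^sub>0 \<Longrightarrow> pochhammer (x::complex) k \<noteq> 0"
  by (auto simp: pochhammer_eq_0_iff)

lemma poch_neg_nat:
  assumes "i \<le> N"
  shows "pochhammer (- of_nat N :: complex) i = (-1)^i * fact N / fact (N - i)"
proof -
  have "fact N = (pochhammer 1 (N - i + i) :: complex)"
    using assms by (simp add: pochhammer_fact)
  also have "\<dots> = fact (N - i) * pochhammer (1 + of_nat (N - i)) i"
    by (simp add: pochhammer_product' pochhammer_fact)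
  finally have "(fact N :: complex) = fact (N - i) * pochhammer (1 + of_nat (N - i)) i" .
  moreover have "pochhammer (- of_nat N :: complex) i = (-1)^i * pochhammer (of_nat N - of_nat i + 1) i"
    by (simp add: pochhammer_minus)
  moreover have "(of_nat N - of_nat i + 1 :: complex) = 1 + of_nat (N - i)"
    using assms by (simp add: of_nat_diff)
  ultimately show ?thesis by (simp add: field_simps)
qed

lemma fact_add_poch: "(fact (s + i) :: complex) = fact s * pochhammer (of_nat s + 1) i"
  using pochhammer_product'[of "1::complex" s i] by (simp add: pochhammer_fact add_ac)

lemma hyperF_fin:
  "hyperF [- of_nat M, x, y] [b1, b2] z =
    (\<Sum>k\<le>M. pochhammer (- of_nat M) k * pochhammer x k * pochhammer y k
        / (fact k * (pochhammer b1 k * pochhammer b2 k)) * z ^ k)"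
  unfolding hyperF_def
  apply (subst suminf_finite[of "{..M}"])
    apply (auto simp: pochhammer_of_nat_eq_0_iff mult_ac)
  done

lemma poch_pair: "pochhammer (1 + (u::complex)) (j + p) * pochhammer (- u) j
   = (-1)^j * pochhammer (u - of_nat j + 1) (2 * j + p :: nat)"
proof (induction j)
  case 0 then show ?case by (simp add: add.commute)
next
  case (Suc j)
  have e1: "pochhammer (1 + u) (Suc j + p) = pochhammer (1 + u) (j + p) * (1 + u + of_nat (j + p))"
    by (simp add: pochhammer_Suc)
  have e2: "pochhammer (-u) (Suc j) = pochhammer (-u) j * (- u + of_nat j)"
    by (simp add: pochhammer_Suc)
  have e3: "pochhammer (u - of_nat (Suc j) + 1) (2 * Suc j + p)
     = (u - of_nat j) * pochhammer (u - of_nat j + 1) (2 * j + p) * (u + of_nat j + of_nat p + 1)"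
  proof -
    have "2 * Suc j + p = Suc (Suc (2*j+p))" by simp
    hence "pochhammer (u - of_nat (Suc j) + 1) (2 * Suc j + p)
       = (u - of_nat j) * pochhammer (u - of_nat j + 1) (Suc (2 * j + p))"
      by (simp add: pochhammer_rec algebra_simps)
    also have "\<dots> = (u - of_nat j) * pochhammer (u - of_nat j + 1) (2 * j + p) * (u + of_nat j + of_nat p + 1)"
      by (simp add: pochhammer_Suc algebra_simps)
    finally show ?thesis .
  qed
  show ?case using Suc.IH unfolding e1 e2 e3
    by (simp add: algebra_simps)
qed

lemma fact_half: "p \<le> 1 \<Longrightarrow> (fact j * pochhammer (of_nat p + 1/2) j * 4 ^ j :: complex) = fact (2 * j + p)"
proof -
  assume "p \<le> 1"
  then consider "p = 0" | "p = 1" by linarith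
  then show ?thesis
  proof cases
    case 1
    have "pochhammer (2 * (1/2::complex)) (2 * j) = of_nat (2^(2*j)) * pochhammer (1/2) j * pochhammer (1/2 + 1/2) j"
      by (rule pochhammer_double)
    then show ?thesis using 1 by (simp add: pochhammer_fact power_mult)
  next
    case 2
    have "pochhammer (2 * (1::complex)) (2 * j) = of_nat (2^(2*j)) * pochhammer 1 j * pochhammer (1 + 1/2) j"
      by (rule pochhammer_double)
    moreover have "fact (2 * j + 1) = (pochhammer (2::complex) (2 * j))"
      by (simp add: pochhammer_fact pochhammer_rec)
    ultimately show ?thesis using 2 by (simp add: pochhammer_fact power_mult)
  qed
qed

lemma C_ok: "\<forall>i\<in>{0..<N}. (of_nat s + 1 :: complex) \<noteq> - of_nat i"
proof
  fix i assume "i \<in> {0..<N}"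
  have "(of_nat (s + 1 + i) :: complex) \<noteq> 0" by (simp only: of_nat_eq_0_iff)
  then show "(of_nat s + 1 :: complex) \<noteq> - of_nat i"
    by (auto simp: eq_neg_iff_add_eq_0 algebra_simps)
qed

lemma termA:
  assumes "i \<le> k"
  shows "(-1)^(i+d) * fact n / (fact (k-i) * fact (s+2*i)) * of_nat ((s+2*i) choose i)
            * pochhammer (1-a) (s+i)
       = (-1)^d * fact n / (fact k * fact s) * pochhammer (1-a) s *
          ((pochhammer (1 - a + of_nat s) i * pochhammer (- of_nat k) i)
              / (of_nat (fact i) * pochhammer (of_nat s + 1) i) :: complex)"
proof -
  have b: "(of_nat ((s+2*i) choose i) :: complex) = fact (s+2*i) / (fact i * fact (s+i))"
    by (subst binomial_fact) (auto simp: add_ac)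
  have f: "(fact (s+i) :: complex) = fact s * pochhammer (of_nat s + 1) i" by (rule fact_add_poch)
  have q: "pochhammer (1-a) (s+i) = pochhammer (1-a) s * pochhammer (1 - a + of_nat s) i"
    by (rule pochhammer_product')
  have nk: "pochhammer (- of_nat k :: complex) i = (-1)^i * fact k / fact (k - i)"
    by (rule poch_neg_nat[OF assms])
  have pc: "pochhammer (of_nat s + 1 :: complex) i \<noteq> 0"
    using f by (metis fact_nonzero mult_zero_right)
  show ?thesis unfolding b q nk f
    using pc by (simp add: field_simps power_add)
qed

lemma termB:
  assumes "i \<le> N"
  shows "(-1)^(i+d) * fact n / (fact (N-i) * fact (e+2*i)) * of_nat ((e+2*i) choose (e+i))
            * pochhammer (1-a) i
       = (-1)^d * fact n / (fact N * fact e) *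
          ((pochhammer (1-a) i * pochhammer (- of_nat N) i)
              / (of_nat (fact i) * pochhammer (of_nat e + 1) i) :: complex)"
proof -
  have b: "(of_nat ((e+2*i) choose (e+i)) :: complex) = fact (e+2*i) / (fact (e+i) * fact i)"
    by (subst binomial_fact) (auto simp: add_ac)
  have f: "(fact (e+i) :: complex) = fact e * pochhammer (of_nat e + 1) i" by (rule fact_add_poch)
  have nk: "pochhammer (- of_nat N :: complex) i = (-1)^i * fact N / fact (N - i)"
    by (rule poch_neg_nat[OF assms])
  have pc: "pochhammer (of_nat e + 1 :: complex) i \<noteq> 0"
    using f by (metis fact_nonzero mult_zero_right)
  show ?thesis unfolding b nk f
    using pc by (simp add: field_simps power_add)
qed

definition wt :: "nat \<Rightarrow> nat \<Rightarrow> nat \<Rightarrow> complex" where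
  "wt n p j = (-1)^j * fact n / (fact (n-j) * fact (2*j+p))"

definition Ec :: "nat \<Rightarrow> nat \<Rightarrow> complex \<Rightarrow> nat \<Rightarrow> nat \<Rightarrow> complex" where
  "Ec n p a j k = (if n \<le> k + j \<and> k \<le> n + j + p
     then of_nat ((2*j+p) choose (k+j-n)) * pochhammer (1-a) (n+j+p-k) else 0)"

lemma expand:
  assumes "j \<le> n"
  shows "pochhammer c (n-j) * pochhammer (c + of_nat (n-j) + (1-a)) (2*j+p)
     = (\<Sum>k\<le>2*n+p. pochhammer c k * Ec n p a j k)"
proof -
  have "pochhammer (c + of_nat (n-j) + (1-a)) (2*j+p) = (\<Sum>i\<le>2*j+p. of_nat ((2*j+p) choose i)
      * pochhammer (c + of_nat (n-j)) i * pochhammer (1-a) (2*j+p-i))"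
    by (rule pochhammer_binomial_sum)
  hence L: "pochhammer c (n-j) * pochhammer (c + of_nat (n-j) + (1-a)) (2*j+p)
     = (\<Sum>i\<le>2*j+p. pochhammer c (n-j+i) * (of_nat ((2*j+p) choose i) * pochhammer (1-a) (2*j+p-i)))"
    by (simp add: sum_distrib_left pochhammer_product' mult_ac)
  have R1: "(\<Sum>k\<le>2*n+p. pochhammer c k * Ec n p a j k) = (\<Sum>k\<in>{n-j..n+j+p}. pochhammer c k * Ec n p a j k)"
    by (rule sum.mono_neutral_right) (use assms in \<open>auto simp: Ec_def\<close>)
  have R2: "{n-j..n+j+p} = {0+(n-j)..(2*j+p)+(n-j)}" using assms by auto
  have R3: "(\<Sum>k\<in>{n-j..n+j+p}. pochhammer c k * Ec n p a j k)
     = (\<Sum>i\<in>{0..2*j+p}. pochhammer c (i+(n-j)) * Ec n p a j (i+(n-j)))"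
    unfolding R2 by (rule sum.shift_bounds_cl_nat_ivl)
  have R4: "Ec n p a j (i+(n-j)) = of_nat ((2*j+p) choose i) * pochhammer (1-a) (2*j+p-i)"
    if "i \<le> 2*j+p" for i
  proof -
    have "n \<le> i + (n-j) + j" "i + (n - j) \<le> n + j + p" "i + (n-j) + j - n = i"
      "n + j + p - (i + (n-j)) = 2*j+p-i" using assms that by auto
    then show ?thesis by (simp add: Ec_def)
  qed
  show ?thesis unfolding L R1 R3
    by (auto simp: atLeast0AtMost R4 add.commute intro!: sum.cong)
qed

lemma coeffA:
  assumes "k \<le> n"
  shows "(\<Sum>j\<le>n. wt n p j * Ec n p a j k) = (-1)^(n-k) * fact n / (fact k * fact (2*n+p-2*k))
     * pochhammer (1-a) (2*n+p-2*k) * (pochhammer a k / pochhammer (of_nat (2*n+p-2*k) + 1) k)"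
proof -
  define s where "s = 2*n+p-2*k"
  have S1: "(\<Sum>j\<le>n. wt n p j * Ec n p a j k) = (\<Sum>j\<in>{n-k..n}. wt n p j * Ec n p a j k)"
    by (rule sum.mono_neutral_right) (auto simp: Ec_def)
  have S2: "{n-k..n} = {0+(n-k)..k+(n-k)}" using assms by auto
  have S3: "(\<Sum>j\<in>{n-k..n}. wt n p j * Ec n p a j k) = (\<Sum>i\<in>{0..k}. wt n p (i+(n-k)) * Ec n p a (i+(n-k)) k)"
    unfolding S2 by (rule sum.shift_bounds_cl_nat_ivl)
  have S4: "wt n p (i+(n-k)) * Ec n p a (i+(n-k)) k = (-1)^(n-k) * fact n / (fact k * fact s) * pochhammer (1-a) s *
          ((pochhammer (1 - a + of_nat s) i * pochhammer (- of_nat k) i)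
              / (of_nat (fact i) * pochhammer (of_nat s + 1) i))" if "i \<in> {0..k}" for i
  proof -
    from that have i: "i \<le> k" by simp
    have e1: "n - (i+(n-k)) = k - i" "2*(i+(n-k))+p = s+2*i" "k + (i+(n-k)) - n = i"
      "n + (i+(n-k)) + p - k = s + i" "n \<le> k + (i+(n-k))" "k \<le> n + (i+(n-k)) + p"
      using i assms s_def by auto
    have "wt n p (i+(n-k)) * Ec n p a (i+(n-k)) k = (-1)^(i+(n-k)) * fact n / (fact (k-i) * fact (s+2*i))
       * of_nat ((s+2*i) choose i) * pochhammer (1-a) (s+i)"
      unfolding wt_def Ec_def e1(1-4) using e1(5,6) by simp
    also note termA[OF i, of "n-k" n s a]
    finally show ?thesis .
  qed
  have S5: "(\<Sum>i\<in>{0..k}. (pochhammer (1 - a + of_nat s) i * pochhammer (- of_nat k) i)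
              / (of_nat (fact i) * pochhammer (of_nat s + 1) i))
      = pochhammer (of_nat s + 1 - (1 - a + of_nat s)) k / pochhammer (of_nat s + 1) k"
    by (rule Vandermonde_pochhammer[OF C_ok])
  have S6: "of_nat s + 1 - (1 - a + of_nat s) = a" by simp
  have "(\<Sum>j\<le>n. wt n p j * Ec n p a j k) = (\<Sum>i\<in>{0..k}. (-1)^(n-k) * fact n / (fact k * fact s) * pochhammer (1-a) s *
          ((pochhammer (1 - a + of_nat s) i * pochhammer (- of_nat k) i)
              / (of_nat (fact i) * pochhammer (of_nat s + 1) i)))"
    unfolding S1 S3 by (rule sum.cong[OF refl S4])
  also have "\<dots> = (-1)^(n-k) * fact n / (fact k * fact s) * pochhammer (1-a) s *
       (\<Sum>i\<in>{0..k}. (pochhammer (1 - a + of_nat s) i * pochhammer (- of_nat k) i)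
              / (of_nat (fact i) * pochhammer (of_nat s + 1) i))"
    by (simp add: sum_distrib_left)
  also have "\<dots> = (-1)^(n-k) * fact n / (fact k * fact s) * pochhammer (1-a) s *
       (pochhammer a k / pochhammer (of_nat s + 1) k)"
    unfolding S5 S6 ..
  finally show ?thesis unfolding s_def .
qed

lemma coeffB:
  assumes "n < k" "k \<le> 2*n+p" "p \<le> 1"
  shows "(\<Sum>j\<le>n. wt n p j * Ec n p a j k) = (-1)^(k-n-p) * fact n / (fact (2*n+p-k) * fact (2*k-2*n-p))
     * (pochhammer (of_nat (2*k-2*n-p) + a) (2*n+p-k) / pochhammer (of_nat (2*k-2*n-p) + 1) (2*n+p-k))"
proof -
  define d where "d = k-n-p"
  define N where "N = 2*n+p-k"
  define e where "e = 2*k-2*n-p"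
  have S1: "(\<Sum>j\<le>n. wt n p j * Ec n p a j k) = (\<Sum>j\<in>{d..n}. wt n p j * Ec n p a j k)"
    by (rule sum.mono_neutral_right) (auto simp: Ec_def d_def)
  have S2: "{d..n} = {0+d..N+d}" using assms d_def N_def by auto
  have S3: "(\<Sum>j\<in>{d..n}. wt n p j * Ec n p a j k) = (\<Sum>i\<in>{0..N}. wt n p (i+d) * Ec n p a (i+d) k)"
    unfolding S2 by (rule sum.shift_bounds_cl_nat_ivl)
  have S4: "wt n p (i+d) * Ec n p a (i+d) k = (-1)^d * fact n / (fact N * fact e) *
          ((pochhammer (1-a) i * pochhammer (- of_nat N) i)
              / (of_nat (fact i) * pochhammer (of_nat e + 1) i))" if "i \<in> {0..N}" for i
  proof -
    from that have i: "i \<le> N" by simp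
    have e1: "n - (i+d) = N - i" "2*(i+d)+p = e+2*i" "k + (i+d) - n = e + i"
      "n + (i+d) + p - k = i" "n \<le> k + (i+d)" "k \<le> n + (i+d) + p"
      using i assms d_def N_def e_def by auto
    have "wt n p (i+d) * Ec n p a (i+d) k = (-1)^(i+d) * fact n / (fact (N-i) * fact (e+2*i))
       * of_nat ((e+2*i) choose (e+i)) * pochhammer (1-a) i"
      unfolding wt_def Ec_def e1(1-4) using e1(5,6) by simp
    also note termB[OF i, of d n e a]
    finally show ?thesis .
  qed
  have S5: "(\<Sum>i\<in>{0..N}. (pochhammer (1-a) i * pochhammer (- of_nat N) i)
              / (of_nat (fact i) * pochhammer (of_nat e + 1) i))
      = pochhammer (of_nat e + 1 - (1 - a)) N / pochhammer (of_nat e + 1) N"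
    by (rule Vandermonde_pochhammer[OF C_ok])
  have S6: "of_nat e + 1 - (1 - a) = of_nat e + a" by simp
  have "(\<Sum>j\<le>n. wt n p j * Ec n p a j k) = (\<Sum>i\<in>{0..N}. (-1)^d * fact n / (fact N * fact e) *
          ((pochhammer (1-a) i * pochhammer (- of_nat N) i)
              / (of_nat (fact i) * pochhammer (of_nat e + 1) i)))"
    unfolding S1 S3 by (rule sum.cong[OF refl S4])
  also have "\<dots> = (-1)^d * fact n / (fact N * fact e) *
       (\<Sum>i\<in>{0..N}. (pochhammer (1-a) i * pochhammer (- of_nat N) i)
              / (of_nat (fact i) * pochhammer (of_nat e + 1) i))"
    by (simp add: sum_distrib_left)
  also have "\<dots> = (-1)^d * fact n / (fact N * fact e) *
       (pochhammer (of_nat e + a) N / pochhammer (of_nat e + 1) N)"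
    unfolding S5 S6 ..
  finally show ?thesis unfolding d_def N_def e_def .
qed

lemma sgn2: "x = y + 2*z \<Longrightarrow> (-1::complex)^x = (-1)^y"
  by (simp add: power_add power_mult)

lemma Q1: "pochhammer (1-(a::complex)) m = (-1)^m * pochhammer (a - of_nat m) m"
  using pochhammer_minus[of "a-1" m] by (simp add: algebra_simps)

lemma QA:
  assumes "2*k \<le> m"
  shows "pochhammer (1-(a::complex)) m = pochhammer (a - of_nat m) (2*k) * pochhammer (1-a) (m-2*k)"
proof -
  have h2: "pochhammer (a - of_nat m) m = pochhammer (a - of_nat m) (2*k) * pochhammer (a - of_nat m + of_nat (2*k)) (m-2*k)"
    using assms by (rule pochhammer_product)
  have h3': "pochhammer (1-a) (m-2*k) = (-1)^(m-2*k) * pochhammer (a - of_nat m + of_nat (2*k)) (m-2*k)"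
    using pochhammer_minus[of "a-1" "m-2*k"] assms by (simp add: algebra_simps of_nat_diff)
  have s: "(-1::complex)^m = (-1)^(m-2*k)" by (rule sgn2[where z=k]) (use assms in simp)
  have s2: "(-1::complex)^(m-2*k) * (-1)^(m-2*k) = 1"
    by (simp add: power_add[symmetric] power_mult[symmetric] mult_2[symmetric])
  show ?thesis unfolding Q1[of a m] h2 h3' s by (simp add: mult_ac)
qed

lemma QB:
  assumes "m \<le> 2*k" "k \<le> m"
  shows "pochhammer (1-(a::complex)) m * pochhammer a k
     = (-1)^m * pochhammer (a - of_nat m) (2*k) * pochhammer (of_nat (2*k-m) + a) (m-k)"
proof -
  have h2: "pochhammer (a - of_nat m) (2*k) = pochhammer (a - of_nat m) m * pochhammer a (2*k-m)"
    using pochhammer_product[of m "2*k" "a - of_nat m"] assms by simp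
  have h3: "pochhammer a k = pochhammer a (2*k-m) * pochhammer (a + of_nat (2*k-m)) (m-k)"
    using pochhammer_product[of "2*k-m" k a] assms by (simp add: algebra_simps)
  show ?thesis unfolding Q1 h2 h3 by (simp add: algebra_simps)
qed

lemma coeff:
  assumes "k \<le> 2*n+p" "p \<le> 1" "pochhammer (a - of_nat (2*n+p)) (2*k) \<noteq> 0"
  shows "pochhammer (1-a) (2*n+p) * (pochhammer (- of_nat (2*n+p)) k * pochhammer a k
            / (fact k * pochhammer (a - of_nat (2*n+p)) (2*k)))
       = (-1)^n * fact (2*n+p) / fact n * (\<Sum>j\<le>n. wt n p j * Ec n p a j k)"
proof (cases "k \<le> n")
  case True
  define m where "m = 2*n+p"
  define s where "s = 2*n+p-2*k"
  have km: "k \<le> m" "2*k \<le> m" using True m_def by auto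
  have q: "pochhammer (1-a) m = pochhammer (a - of_nat m) (2*k) * pochhammer (1-a) s"
    unfolding s_def m_def[symmetric] using km(2) by (rule QA)
  have nm: "pochhammer (- of_nat m :: complex) k = (-1)^k * fact m / fact (m - k)"
    using km(1) by (rule poch_neg_nat)
  have f: "(fact (m-k) :: complex) = fact s * pochhammer (of_nat s + 1) k"
    using fact_add_poch[of s k] km unfolding s_def m_def by (simp add: algebra_simps)
  have sg: "(-1::complex)^n * (-1)^(n-k) = (-1)^k"
    unfolding power_add[symmetric] by (rule sgn2[where z="n-k"]) (use True in simp)
  have pc: "pochhammer (of_nat s + 1 :: complex) k \<noteq> 0"
    using f by (metis fact_nonzero mult_zero_right)
  have "(-1)^n * fact m / fact n * (\<Sum>j\<le>n. wt n p j * Ec n p a j k)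
     = ((-1)^n * (-1)^(n-k)) * fact m / (fact k * fact s) * pochhammer (1-a) s * (pochhammer a k / pochhammer (of_nat s + 1) k)"
    unfolding coeffA[OF True] s_def[symmetric] by (simp add: field_simps)
  also have "\<dots> = pochhammer (1-a) m * (pochhammer (- of_nat m) k * pochhammer a k
            / (fact k * pochhammer (a - of_nat m) (2*k)))"
    unfolding sg q nm f using assms(3) pc unfolding m_def by (simp add: field_simps)
  finally show ?thesis unfolding m_def by simp
next
  case False
  define m where "m = 2*n+p"
  define e where "e = 2*k-2*n-p"
  define N where "N = 2*n+p-k"
  have km: "k \<le> m" "m \<le> 2*k" "n < k" using False assms m_def by auto
  have q: "pochhammer (1-a) m * pochhammer a k = (-1)^m * pochhammer (a - of_nat m) (2*k) * pochhammer (of_nat e + a) N"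
    unfolding e_def N_def using QB[OF km(2,1), of a] unfolding m_def by (simp add: algebra_simps)
  have nm: "pochhammer (- of_nat m :: complex) k = (-1)^k * fact m / fact N"
    using poch_neg_nat[OF km(1)] unfolding N_def m_def by simp
  have f: "(fact k :: complex) = fact e * pochhammer (of_nat e + 1) N"
    using fact_add_poch[of e N] km unfolding e_def N_def m_def by (simp add: algebra_simps)
  have sg: "(-1::complex)^m * (-1)^k = (-1)^n * (-1)^(k-n-p)"
    unfolding power_add[symmetric] by (rule sgn2[where z="n+p"]) (use km assms in \<open>simp add: m_def\<close>)
  have pc: "pochhammer (of_nat e + 1 :: complex) N \<noteq> 0"
    using f by (metis fact_nonzero mult_zero_right)
  have "(-1)^n * fact m / fact n * (\<Sum>j\<le>n. wt n p j * Ec n p a j k)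
     = ((-1)^n * (-1)^(k-n-p)) * fact m / (fact N * fact e) * (pochhammer (of_nat e + a) N / pochhammer (of_nat e + 1) N)"
    unfolding coeffB[OF km(3) assms(1,2)] e_def[symmetric] N_def[symmetric] by (simp add: field_simps)
  also have "\<dots> = (pochhammer (1-a) m * pochhammer a k) * pochhammer (- of_nat m) k
            / (fact k * pochhammer (a - of_nat m) (2*k))"
    unfolding q nm f sg[symmetric] using assms(3) pc unfolding m_def by (simp add: field_simps)
  finally show ?thesis unfolding m_def by (simp add: field_simps)
qed


lemma L2:
  assumes "j \<le> n"
  shows "pochhammer (c::complex) n = (-1)^j * pochhammer c (n-j) * pochhammer (1 - c - of_nat n) j"
proof -
  have h1: "pochhammer c n = pochhammer c (n-j) * pochhammer (c + of_nat (n-j)) (n - (n-j))"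
    using pochhammer_product[of "n-j" n c] by simp
  have h2: "pochhammer (1 - c - of_nat n) j = (-1)^j * pochhammer (c + of_nat (n-j)) j"
    using pochhammer_minus[of "c + of_nat n - 1" j] assms by (simp add: algebra_simps of_nat_diff)
  have s2: "(-1::complex)^j * (-1)^j = 1"
    by (simp add: power_add[symmetric] power_mult[symmetric] mult_2[symmetric])
  have "n - (n-j) = j" using assms by simp
  then show ?thesis unfolding h1 h2 using s2
    by (metis (no_types, lifting) mult.assoc mult.commute mult.left_neutral)
qed

lemma pp: "p \<le> 1 \<Longrightarrow> (1+u)^p * pochhammer (of_nat p + 1 + u) j = pochhammer (1+(u::complex)) (j+p)"
proof -
  assume "p \<le> 1"
  then consider "p = 0" | "p = 1" by linarith
  then show ?thesis
  proof cases
    case 1 then show ?thesis by (simp add: add_ac)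
  next
    case 2 then show ?thesis by (simp add: pochhammer_rec add_ac)
  qed
qed

lemma rhs_term:
  assumes "j \<le> n" "p \<le> 1" "pochhammer (1 - c - of_nat n) j \<noteq> 0"
  shows "(1 + c - a + of_nat n)^p * pochhammer c n *
    (pochhammer (- of_nat n) j * pochhammer (of_nat p + 1 + c - a + of_nat n) j
        * pochhammer (a - c - of_nat n) j
      / (fact j * (pochhammer (of_nat p + 1/2) j * pochhammer (1 - c - of_nat n) j)) * (1/4)^j)
   = wt n p j * (pochhammer c (n-j) * pochhammer (c + of_nat (n-j) + (1-a)) (2*j+p))"
proof -
  define u where "u = c - a + of_nat n"
  have e1: "1 + c - a + of_nat n = 1 + u" "of_nat p + 1 + c - a + of_nat n = of_nat p + 1 + u"
    "a - c - of_nat n = - u" unfolding u_def by (simp_all add: algebra_simps)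
  have e2: "c + of_nat (n-j) + (1-a) = u - of_nat j + 1"
    unfolding u_def using assms(1) by (simp add: algebra_simps of_nat_diff)
  have P: "(1+u)^p * pochhammer (of_nat p + 1 + u) j * pochhammer (-u) j
      = (-1)^j * pochhammer (u - of_nat j + 1) (2 * j + p)"
    unfolding pp[OF assms(2)] by (rule poch_pair)
  have F: "fact j * pochhammer (of_nat p + 1/2) j = fact (2*j+p) / (4::complex)^j"
    using fact_half[OF assms(2), of j] by (simp add: field_simps)
  have N: "pochhammer (- of_nat n :: complex) j = (-1)^j * fact n / fact (n - j)"
    using assms(1) by (rule poch_neg_nat)
  have s2: "(-1::complex)^j * (-1)^j = 1"
    by (simp add: power_add[symmetric] power_mult[symmetric] mult_2[symmetric])
  define X where "X = pochhammer (u - of_nat j + 1) (2 * j + p)"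
  define Y where "Y = pochhammer (1 - c - of_nat n) j"
  have LHS: "(1 + c - a + of_nat n)^p * pochhammer c n *
    (pochhammer (- of_nat n) j * pochhammer (of_nat p + 1 + c - a + of_nat n) j
        * pochhammer (a - c - of_nat n) j
      / (fact j * (pochhammer (of_nat p + 1/2) j * pochhammer (1 - c - of_nat n) j)) * (1/4)^j)
    = ((1+u)^p * pochhammer (of_nat p + 1 + u) j * pochhammer (-u) j) * pochhammer c n *
       pochhammer (- of_nat n) j / ((fact j * pochhammer (of_nat p + 1/2) j) * 4^j * Y)"
    unfolding e1 Y_def by (simp add: field_simps)
  show ?thesis unfolding LHS unfolding P F N L2[OF assms(1), of c] e2 X_def[symmetric] Y_def[symmetric] wt_def
    using assms(3) s2 unfolding Y_def[symmetric]
    by (simp add: field_simps)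
qed


lemma core:
  fixes n p :: nat and a c :: complex
  assumes p: "p \<le> 1" and nz: "\<And>k. k \<le> 2*n+p \<Longrightarrow> pochhammer (a - of_nat (2*n+p)) (2*k) \<noteq> 0"
    and Q: "pochhammer (1-a) (2*n+p) \<noteq> 0"
  shows "(\<Sum>k\<le>2*n+p. pochhammer (- of_nat (2*n+p)) k * pochhammer a k * pochhammer c k
            / (fact k * pochhammer (a - of_nat (2*n+p)) (2*k)))
   = (-1)^n * fact (2*n+p) / (fact n * pochhammer (1-a) (2*n+p)) *
       (\<Sum>j\<le>n. wt n p j * (pochhammer c (n-j) * pochhammer (c + of_nat (n-j) + (1-a)) (2*j+p)))"
proof -
  define m where "m = 2*n+p"
  define S where "S k = (\<Sum>j\<le>n. wt n p j * Ec n p a j k)" for k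
  have "(\<Sum>j\<le>n. wt n p j * (pochhammer c (n-j) * pochhammer (c + of_nat (n-j) + (1-a)) (2*j+p)))
      = (\<Sum>j\<le>n. wt n p j * (\<Sum>k\<le>m. pochhammer c k * Ec n p a j k))"
    unfolding m_def
    apply (rule sum.cong[OF refl])
    subgoal for j using expand[of j n c a p] by simp
    done
  also have "\<dots> = (\<Sum>j\<le>n. \<Sum>k\<le>m. pochhammer c k * (wt n p j * Ec n p a j k))"
    by (simp add: sum_distrib_left mult_ac)
  also have "\<dots> = (\<Sum>k\<le>m. \<Sum>j\<le>n. pochhammer c k * (wt n p j * Ec n p a j k))"
    by (rule sum.swap)
  also have "\<dots> = (\<Sum>k\<le>m. pochhammer c k * S k)"
    by (simp add: S_def sum_distrib_left)
  finally have R: "(\<Sum>j\<le>n. wt n p j * (pochhammer c (n-j) * pochhammer (c + of_nat (n-j) + (1-a)) (2*j+p)))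
      = (\<Sum>k\<le>m. pochhammer c k * S k)" .
  have T: "(-1)^n * fact m / (fact n * pochhammer (1-a) m) * (pochhammer c k * S k)
     = pochhammer (- of_nat m) k * pochhammer a k * pochhammer c k / (fact k * pochhammer (a - of_nat m) (2*k))"
    if k: "k \<le> m" for k
  proof -
    have cf: "(-1)^n * fact m / fact n * S k = pochhammer (1-a) m * (pochhammer (- of_nat m) k * pochhammer a k
            / (fact k * pochhammer (a - of_nat m) (2*k)))"
      using coeff[of k n p a] k p nz[of k] unfolding S_def m_def by simp
    have "(-1)^n * fact m / (fact n * pochhammer (1-a) m) * (pochhammer c k * S k)
        = pochhammer c k * ((-1)^n * fact m / fact n * S k) / pochhammer (1-a) m"
      by (simp add: field_simps)
    also have "\<dots> = pochhammer c k * (pochhammer (- of_nat m) k * pochhammer a k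
            / (fact k * pochhammer (a - of_nat m) (2*k)))"
      unfolding cf using Q unfolding m_def by simp
    finally show ?thesis by (simp add: field_simps)
  qed
  show ?thesis unfolding m_def[symmetric] R sum_distrib_left
    apply (rule sum.cong[OF refl])
    subgoal for x using T[of x] by simp
    done
qed

lemma main_p:
  fixes n p :: nat and a c l :: complex
  assumes p: "p \<le> 1" and hc: "1 - c - of_nat n \<notin> \<int>\<^sub>\<le>\<^sub>0"
    and hl1: "l \<notin> \<int>\<^sub>\<le>\<^sub>0" and hl2: "l + 1/2 \<notin> \<int>\<^sub>\<le>\<^sub>0"
    and hl: "2*l = a - of_nat (2*n+p)" and Q: "pochhammer (1-a) (2*n+p) \<noteq> 0"
  shows "hyperF [- of_nat (2*n+p), a, c] [l, l + 1/2] (1/4)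
    = (-1)^n * fact (2*n+p) / (fact n * pochhammer (1-a) (2*n+p)) *
      ((1 + c - a + of_nat n)^p * pochhammer c n *
       hyperF [- of_nat n, of_nat p + 1 + c - a + of_nat n, a - c - of_nat n]
              [of_nat p + 1/2, 1 - c - of_nat n] (1/4))"
proof -
  define m where "m = 2*n+p"
  have dbl: "pochhammer l k * pochhammer (l + 1/2) k = pochhammer (a - of_nat m) (2*k) / 4^k" for k
  proof -
    have "pochhammer (2*l) (2*k) = of_nat (2^(2*k)) * pochhammer l k * pochhammer (l + 1/2) k"
      by (rule pochhammer_double)
    moreover have "(of_nat (2^(2*k)) :: complex) = 4^k" by (simp add: power_mult)
    ultimately show ?thesis unfolding hl m_def by (simp add: field_simps)
  qed
  have nz: "pochhammer (a - of_nat m) (2*k) \<noteq> 0" for k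
  proof -
    have "pochhammer l k * pochhammer (l + 1/2) k \<noteq> 0" using poch_nz[OF hl1] poch_nz[OF hl2] by simp
    then show ?thesis unfolding dbl by simp
  qed
  have L: "hyperF [- of_nat m, a, c] [l, l + 1/2] (1/4) =
     (\<Sum>k\<le>m. pochhammer (- of_nat m) k * pochhammer a k * pochhammer c k
            / (fact k * pochhammer (a - of_nat m) (2*k)))"
    unfolding hyperF_fin dbl
    apply (rule sum.cong[OF refl])
    subgoal for k using nz[of k] by (simp add: field_simps)
    done
  have R: "(1 + c - a + of_nat n)^p * pochhammer c n *
       hyperF [- of_nat n, of_nat p + 1 + c - a + of_nat n, a - c - of_nat n]
              [of_nat p + 1/2, 1 - c - of_nat n] (1/4)
     = (\<Sum>j\<le>n. wt n p j * (pochhammer c (n-j) * pochhammer (c + of_nat (n-j) + (1-a)) (2*j+p)))"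
    unfolding hyperF_fin sum_distrib_left
    apply (rule sum.cong[OF refl])
    subgoal for j using rhs_term[of j n p c a] p poch_nz[OF hc, of j] by simp
    done
  have nz': "\<And>k. k \<le> 2*n+p \<Longrightarrow> pochhammer (a - of_nat (2*n+p)) (2*k) \<noteq> 0"
    using nz unfolding m_def by blast
  show ?thesis unfolding m_def[symmetric] L R unfolding m_def
    by (rule core[OF p nz' Q])
qed


theorem proposition5p2:
  fixes n :: nat and a c :: complex
  assumes hc: "1 - c - of_nat n \<notin> \<int>\<^sub>\<le>\<^sub>0"
  shows "(a / 2 - of_nat n \<notin> \<int>\<^sub>\<le>\<^sub>0 \<and> (a + 1) / 2 - of_nat n \<notin> \<int>\<^sub>\<le>\<^sub>0
            \<and> pochhammer (1 - a) (2 * n) \<noteq> 0 \<longrightarrow>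
          hyperF [- of_nat (2 * n), a, c] [a / 2 - of_nat n, (a + 1) / 2 - of_nat n] (1 / 4)
          = (-1) ^ n * fact (2 * n) * pochhammer c n / (fact n * pochhammer (1 - a) (2 * n))
            * hyperF [- of_nat n, 1 + c - a + of_nat n, a - c - of_nat n] [1 / 2, 1 - c - of_nat n] (1 / 4))
       \<and> ((a - 1) / 2 - of_nat n \<notin> \<int>\<^sub>\<le>\<^sub>0 \<and> a / 2 - of_nat n \<notin> \<int>\<^sub>\<le>\<^sub>0
            \<and> pochhammer (1 - a) (2 * n + 1) \<noteq> 0 \<longrightarrow>
          hyperF [- of_nat (2 * n + 1), a, c] [(a - 1) / 2 - of_nat n, a / 2 - of_nat n] (1 / 4)
          = (-1) ^ n * (1 + c - a + of_nat n) * fact (2 * n + 1) * pochhammer c n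
              / (fact n * pochhammer (1 - a) (2 * n + 1))
            * hyperF [- of_nat n, 2 + c - a + of_nat n, a - c - of_nat n] [3 / 2, 1 - c - of_nat n] (1 / 4))"
proof (intro conjI impI)
  assume h: "a / 2 - of_nat n \<notin> \<int>\<^sub>\<le>\<^sub>0 \<and> (a + 1) / 2 - of_nat n \<notin> \<int>\<^sub>\<le>\<^sub>0
            \<and> pochhammer (1 - a) (2 * n) \<noteq> 0"
  have l2: "(a + 1) / 2 - of_nat n = (a / 2 - of_nat n) + 1/2" by (simp add: field_simps)
  have hl: "2 * (a / 2 - of_nat n) = a - of_nat (2 * n + 0)" by simp
  have X: "hyperF [- of_nat (2*n+0), a, c] [a / 2 - of_nat n, (a / 2 - of_nat n) + 1/2] (1/4)
    = (-1)^n * fact (2*n+0) / (fact n * pochhammer (1-a) (2*n+0)) *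
      ((1 + c - a + of_nat n)^0 * pochhammer c n *
       hyperF [- of_nat n, of_nat 0 + 1 + c - a + of_nat n, a - c - of_nat n]
              [of_nat 0 + 1/2, 1 - c - of_nat n] (1/4))"
    by (rule main_p) (use h hc hl l2 in auto)
  show "hyperF [- of_nat (2 * n), a, c] [a / 2 - of_nat n, (a + 1) / 2 - of_nat n] (1 / 4)
          = (-1) ^ n * fact (2 * n) * pochhammer c n / (fact n * pochhammer (1 - a) (2 * n))
            * hyperF [- of_nat n, 1 + c - a + of_nat n, a - c - of_nat n] [1 / 2, 1 - c - of_nat n] (1 / 4)"
    unfolding l2 using X by simp
next
  assume h: "(a - 1) / 2 - of_nat n \<notin> \<int>\<^sub>\<le>\<^sub>0 \<and> a / 2 - of_nat n \<notin> \<int>\<^sub>\<le>\<^sub>0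
            \<and> pochhammer (1 - a) (2 * n + 1) \<noteq> 0"
  have l2: "a / 2 - of_nat n = ((a - 1) / 2 - of_nat n) + 1/2" by (simp add: field_simps)
  have hl: "2 * ((a - 1) / 2 - of_nat n) = a - of_nat (2 * n + 1)" by (simp add: field_simps)
  have X: "hyperF [- of_nat (2*n+1), a, c] [(a - 1) / 2 - of_nat n, ((a - 1) / 2 - of_nat n) + 1/2] (1/4)
    = (-1)^n * fact (2*n+1) / (fact n * pochhammer (1-a) (2*n+1)) *
      ((1 + c - a + of_nat n)^1 * pochhammer c n *
       hyperF [- of_nat n, of_nat 1 + 1 + c - a + of_nat n, a - c - of_nat n]
              [of_nat 1 + 1/2, 1 - c - of_nat n] (1/4))"
    by (rule main_p) (use h hc hl l2 in auto)
  have e3: "(of_nat 1 + 1/2 :: complex) = 3/2" "(of_nat 1 + 1 + c - a + of_nat n :: complex) = 2 + c - a + of_nat n"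
    by simp_all
  show "hyperF [- of_nat (2 * n + 1), a, c] [(a - 1) / 2 - of_nat n, a / 2 - of_nat n] (1 / 4)
          = (-1) ^ n * (1 + c - a + of_nat n) * fact (2 * n + 1) * pochhammer c n
              / (fact n * pochhammer (1 - a) (2 * n + 1))
            * hyperF [- of_nat n, 2 + c - a + of_nat n, a - c - of_nat n] [3 / 2, 1 - c - of_nat n] (1 / 4)"
    unfolding l2 using X unfolding e3 by simp
qed

end
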